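(* With $\theta$ and $\widehat\Theta$ as in the context, $(X_\theta,S)$ is a topological factor of $(X_{\widehat\Theta},S)$, i.e. there is a continuous surjection $\pi:X_{\widehat\Theta}\to X_\theta$ with $\pi\circ S=S\circ\pi$.
   Context: For a primitive substitution $\zeta$ over an alphabet $\mathbb{B}$, $X_\zeta\subset\mathbb{B}^{\mathbb{Z}}$ is the set of sequences all of whose finite blocks occur in some iterate $\zeta^k(b)$, and $S$ is the left shift. Let $\theta:\mathbb{A}\to\mathbb{A}^\lambda$ ($\lambda\ge2$) be primitive, injective on letters, with infinite subshift, $c=c(\theta)=\min_{k\ge1,0\le j<\lambda^k}|\{\theta^k(a)_j:a\in\mathbb{A}\}|$. Let $\mathcal{X}$ be the set of $M\subset\mathbb{A}$ with $|M|=c$ and $M=\{\theta^k(a)_j:a\in\mathbb{A}\}$ for some $k\ge1$, $j<\lambda^k$; $\widetilde\theta(M)_j:=\{\theta(a)_j:a\in M\}\in\mathcal{X}$, and $a\mapsto\theta(a)_j$ is a bijection $M\to\widetilde\theta(M)_j$. Assume (after passing to a power) $a_0\in M_0\in\mathcal{X}$ with $\theta(a_0)_0=a_0$, $\widetilde\theta(M_0)_0=M_0$. Fix a total order on $M_0$ with minimum $a_0$, and $k_0\ge1$, $j_0<\lambda^{k_0}$ with $\theta^{k_0}(a)_{j_0}=a$ ($a\in M_0$) and $\widetilde\theta^{k_0}(M)_{j_0}=M_0$ ($M\in\mathcal{X}$). Order each $M$ by $a<b$ iff $\theta^{k_0}(a)_{j_0}<\theta^{k_0}(b)_{j_0}$;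 $e_M(i)$ is the $(i+1)$-th smallest element of $M$. $\widetilde\Theta(i,M)_j=(i',\widetilde\theta(M)_j)$ where $\theta(e_M(i))_j=e_{\widetilde\theta(M)_j}(i')$; $\sigma_{M,j}\in\mathcal{S}_c$ is defined by $\sigma_{M,j}(m)=n$ iff $\widetilde\Theta(n,M)_j=(m,\widetilde\theta(M)_j)$; $G=\langle\sigma_{M,j}\rangle\le\mathcal{S}_c$; $\widehat\Theta:G\times\mathcal{X}\to(G\times\mathcal{X})^\lambda$, $\widehat\Theta(\sigma,M)_j=(\sigma\circ\sigma_{M,j},\widetilde\theta(M)_j)$ (a primitive substitution). *)

theory Defs
  imports "HOL-Analysis.Analysis"
begin

text \<open>A substitution of constant length L over letters of type 'b is a map
  zeta :: 'b => nat => 'b, where zeta b j (for j < L) is the j-th letter of zeta(b).\<close>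

fun subst_pow :: "nat \<Rightarrow> ('b \<Rightarrow> nat \<Rightarrow> 'b) \<Rightarrow> nat \<Rightarrow> 'b \<Rightarrow> nat \<Rightarrow> 'b" where
  "subst_pow L z 0 b = (\<lambda>j. b)"
| "subst_pow L z (Suc k) b = (\<lambda>j. z (subst_pow L z k b (j div L)) (j mod L))"

definition subst_lang :: "'b set \<Rightarrow> nat \<Rightarrow> ('b \<Rightarrow> nat \<Rightarrow> 'b) \<Rightarrow> 'b list set" where
  "subst_lang B L z = {w. \<exists>b\<in>B. \<exists>k i. i + length w \<le> L ^ k \<and>
       (\<forall>t<length w. w ! t = subst_pow L z k b (i + t))}"

definition subshift :: "'b set \<Rightarrow> nat \<Rightarrow> ('b \<Rightarrow> nat \<Rightarrow> 'b) \<Rightarrow> (int \<Rightarrow> 'b) set" where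
  "subshift B L z = {x. \<forall>m (n::nat). map (\<lambda>t. x (m + int t)) [0..<n] \<in> subst_lang B L z}"

definition shift :: "(int \<Rightarrow> 'b) \<Rightarrow> (int \<Rightarrow> 'b)" where
  "shift x = (\<lambda>n. x (n + 1))"

definition shift_topology :: "(int \<Rightarrow> 'b) topology" where
  "shift_topology = product_topology (\<lambda>_. discrete_topology UNIV) UNIV"

definition primitive_subst :: "'b set \<Rightarrow> nat \<Rightarrow> ('b \<Rightarrow> nat \<Rightarrow> 'b) \<Rightarrow> bool" where
  "primitive_subst B L z \<longleftrightarrow> (\<exists>k\<ge>1. \<forall>a\<in>B. \<forall>b\<in>B. \<exists>j<L ^ k. subst_pow L z k a j = b)"

definition column :: "nat \<Rightarrow> ('a \<Rightarrow> nat \<Rightarrow> 'a) \<Rightarrow> nat \<Rightarrow> nat \<Rightarrow> 'a set" where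
  "column L th k j = {subst_pow L th k a j | a. True}"

definition col_min :: "nat \<Rightarrow> ('a \<Rightarrow> nat \<Rightarrow> 'a) \<Rightarrow> nat" where
  "col_min L th = (LEAST n. \<exists>k\<ge>1. \<exists>j<L ^ k. card (column L th k j) = n)"

definition minsets :: "nat \<Rightarrow> ('a \<Rightarrow> nat \<Rightarrow> 'a) \<Rightarrow> 'a set set" where
  "minsets L th = {M. card M = col_min L th \<and> (\<exists>k\<ge>1. \<exists>j<L ^ k. M = column L th k j)}"

definition tsubst :: "nat \<Rightarrow> ('a \<Rightarrow> nat \<Rightarrow> 'a) \<Rightarrow> nat \<Rightarrow> 'a set \<Rightarrow> nat \<Rightarrow> 'a set" where
  "tsubst L th k M j = (\<lambda>a. subst_pow L th k a j) ` M"

text \<open>The order on M0 is given by an enumeration e0 : {0..<c} -> M0 in increasing order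
  (e0 i = the (i+1)-th smallest element of M0). For M in X the order is
  a < b iff theta^k0(a)_j0 < theta^k0(b)_j0, so the (i+1)-th smallest element of M
  is the element of M sent to e0 i by a |-> theta^k0(a)_j0.\<close>
definition eM :: "nat \<Rightarrow> ('a \<Rightarrow> nat \<Rightarrow> 'a) \<Rightarrow> nat \<Rightarrow> nat \<Rightarrow> (nat \<Rightarrow> 'a) \<Rightarrow> 'a set \<Rightarrow> nat \<Rightarrow> 'a" where
  "eM L th k0 j0 e0 M i = (THE a. a \<in> M \<and> subst_pow L th k0 a j0 = e0 i)"

definition sigmaM :: "nat \<Rightarrow> ('a \<Rightarrow> nat \<Rightarrow> 'a) \<Rightarrow> nat \<Rightarrow> nat \<Rightarrow> (nat \<Rightarrow> 'a) \<Rightarrow> 'a set \<Rightarrow> nat \<Rightarrow> nat \<Rightarrow> nat" where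
  "sigmaM L th k0 j0 e0 M j m =
     (if m < col_min L th then
        (THE n. n < col_min L th \<and>
           th (eM L th k0 j0 e0 M n) j = eM L th k0 j0 e0 (tsubst L th 1 M j) m)
      else m)"

inductive_set gen_group :: "(nat \<Rightarrow> nat) set \<Rightarrow> (nat \<Rightarrow> nat) set" for S where
  gen_id: "id \<in> gen_group S"
| gen_base: "s \<in> S \<Longrightarrow> s \<in> gen_group S"
| gen_comp: "f \<in> gen_group S \<Longrightarrow> g \<in> gen_group S \<Longrightarrow> f \<circ> g \<in> gen_group S"
| gen_inv: "f \<in> gen_group S \<Longrightarrow> inv f \<in> gen_group S"

definition Ggroup :: "nat \<Rightarrow> ('a \<Rightarrow> nat \<Rightarrow> 'a) \<Rightarrow> nat \<Rightarrow> nat \<Rightarrow> (nat \<Rightarrow> 'a) \<Rightarrow> (nat \<Rightarrow> nat) set" where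
  "Ggroup L th k0 j0 e0 =
     gen_group {sigmaM L th k0 j0 e0 M j | M j. M \<in> minsets L th \<and> j < L}"

definition hatTheta :: "nat \<Rightarrow> ('a \<Rightarrow> nat \<Rightarrow> 'a) \<Rightarrow> nat \<Rightarrow> nat \<Rightarrow> (nat \<Rightarrow> 'a)
    \<Rightarrow> ((nat \<Rightarrow> nat) \<times> 'a set) \<Rightarrow> nat \<Rightarrow> ((nat \<Rightarrow> nat) \<times> 'a set)" where
  "hatTheta L th k0 j0 e0 p j =
     (fst p \<circ> sigmaM L th k0 j0 e0 (snd p) j, tsubst L th 1 (snd p) j)"

definition hatAlph :: "nat \<Rightarrow> ('a \<Rightarrow> nat \<Rightarrow> 'a) \<Rightarrow> nat \<Rightarrow> nat \<Rightarrow> (nat \<Rightarrow> 'a) \<Rightarrow> ((nat \<Rightarrow> nat) \<times> 'a set) set" where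
  "hatAlph L th k0 j0 e0 = Ggroup L th k0 j0 e0 \<times> minsets L th"

end

theory Submission
  imports Defs
begin



lemma subst_pow_1: "j < L \<Longrightarrow> subst_pow L th 1 a j = th a j"
  by (simp add: One_nat_def)

lemma subst_pow_idx: "0 < L \<Longrightarrow> j < L \<Longrightarrow> subst_pow L th (Suc k) a (j' * L + j) = th (subst_pow L th k a j') j"
  by simp

lemma subst_pow_add:
  assumes L: "0 < L" shows "i < L ^ k \<Longrightarrow> subst_pow L z (k + p) a (j * L ^ k + i) = subst_pow L z k (subst_pow L z p a j) i"
proof (induction k arbitrary: i)
  case 0 then show ?case by simp
next
  case (Suc k)
  have e: "j * L ^ Suc k + i = i + (j * L ^ k) * L" by (simp add: algebra_simps)
  have d: "(j * L ^ Suc k + i) div L = j * L ^ k + i div L"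
    unfolding e using L by simp
  have m: "(j * L ^ Suc k + i) mod L = i mod L"
    unfolding e using L by simp
  have "i div L < L ^ k" using Suc.prems L
    by (simp add: less_mult_imp_div_less mult.commute)
  then show ?case using Suc.IH d m by simp
qed

lemma lang_sub:
  assumes "w \<in> subst_lang B L z" "s + length v \<le> length w" "\<forall>t<length v. v ! t = w ! (s + t)"
  shows "v \<in> subst_lang B L z"
proof -
  from assms(1) obtain b k i where b: "b \<in> B" "i + length w \<le> L ^ k"
    "\<forall>t<length w. w ! t = subst_pow L z k b (i + t)" unfolding subst_lang_def by auto
  show ?thesis unfolding subst_lang_def
    apply (rule CollectI, rule bexI[OF _ b(1)], rule exI[of _ k], rule exI[of _ "i + s"])
    using b assms(2,3) by (auto simp: add.assoc)
qed




definition Pm :: "nat \<Rightarrow> (nat \<Rightarrow> nat) \<Rightarrow> bool" where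
  "Pm c s \<longleftrightarrow> bij s \<and> (\<forall>n. c \<le> n \<longrightarrow> s n = n) \<and> (\<forall>n<c. s n < c)"

lemma Pm_comp: "Pm c s \<Longrightarrow> Pm c t \<Longrightarrow> Pm c (s \<circ> t)"
  unfolding Pm_def by (auto intro: bij_comp)

lemma Pm_basic: assumes "Pm c s"
  shows "inj s" "\<And>n. s (inv s n) = n" "\<And>n. c \<le> n \<Longrightarrow> s n = n" "\<And>n. n < c \<Longrightarrow> inv s n < c"
    "\<And>n. c \<le> n \<Longrightarrow> inv s n = n" "bij (inv s)"
proof -
  have b: "bij s" and o: "\<And>n. c \<le> n \<Longrightarrow> s n = n"
    using assms unfolding Pm_def by auto
  show inj: "inj s" using b bij_is_inj by auto
  show si: "\<And>n. s (inv s n) = n" using b by (simp add: bij_is_surj surj_f_inv_f)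
  show "\<And>n. c \<le> n \<Longrightarrow> s n = n" by (rule o)
  show "\<And>n. c \<le> n \<Longrightarrow> inv s n = n"
  proof -
    fix n assume "c \<le> n"
    then have "s n = n" by (rule o)
    then have "inv s n = inv s (s n)" by simp
    also have "\<dots> = n" using inv_f_f[OF inj] by simp
    finally show "inv s n = n" .
  qed
  show "\<And>n. n < c \<Longrightarrow> inv s n < c"
  proof (rule ccontr)
    fix n assume n: "n < c" "\<not> inv s n < c"
    then have "s (inv s n) = inv s n" using o by simp
    then have "n = inv s n" using si[of n] by simp
    then show False using n by simp
  qed
  show "bij (inv s)" using b bij_imp_bij_inv by auto
qed

lemma Pm_inv: assumes "Pm c s" shows "Pm c (inv s)"
  using Pm_basic[OF assms] unfolding Pm_def by auto

lemma Pm_zero: assumes "Pm c s" "0 < c" shows "\<exists>!n. n < c \<and> s n = 0"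
proof (rule ex1I[of _ "inv s 0"])
  show "inv s 0 < c \<and> s (inv s 0) = 0" using Pm_basic[OF assms(1)] assms(2) by auto
  fix n assume "n < c \<and> s n = 0"
  then have "s n = s (inv s 0)" using Pm_basic[OF assms(1)] by auto
  then show "n = inv s 0" using Pm_basic(1)[OF assms(1)] by (auto dest: injD)
qed

lemma Pm_surj: assumes "Pm c s" "n < c" shows "\<exists>m<c. s m = n"
  using Pm_basic[OF assms(1)] assms(2) by auto

lemma Pm_finite: "finite {s. Pm c s}"
proof -
  have "inj_on (\<lambda>s. restrict s {..<c}) {s. Pm c s}"
  proof (rule inj_onI)
    fix s t assume st: "s \<in> {s. Pm c s}" "t \<in> {s. Pm c s}" "restrict s {..<c} = restrict t {..<c}"
    show "s = t"
    proof
      fix n show "s n = t n"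
      proof (cases "n < c")
        case True
        then show ?thesis using fun_cong[OF st(3), of n] by simp
      next
        case False
        then show ?thesis using st(1,2) unfolding Pm_def by auto
      qed
    qed
  qed
  moreover have "(\<lambda>s. restrict s {..<c}) ` {s. Pm c s} \<subseteq> PiE {..<c} (\<lambda>_. {..<c})"
    unfolding Pm_def by (auto simp: PiE_def extensional_def)
  moreover have "finite (PiE {..<c} (\<lambda>_. {..<c::nat}))" by (rule finite_PiE) auto
  ultimately show ?thesis using finite_imageD finite_subset by metis
qed



locale ctx =
  fixes th :: "'a::finite \<Rightarrow> nat \<Rightarrow> 'a" and L k0 j0 :: nat and e0 :: "nat \<Rightarrow> 'a" and M0 :: "'a set"
  assumes L2: "L \<ge> 2" and M0: "M0 \<in> minsets L th"
    and e0: "bij_betw e0 {..<col_min L th} M0"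
    and k0: "\<forall>M\<in>minsets L th. tsubst L th k0 M j0 = M0"
    and prim: "primitive_subst UNIV L th"
begin

abbreviation "c \<equiv> col_min L th"

lemma Lpos: "0 < L" using L2 by auto

lemma col_ex: "\<exists>k\<ge>1. \<exists>j<L ^ k. card (column L th k j) = c"
proof -
  have "\<exists>k\<ge>1. \<exists>j<L ^ k. card (column L th k j) = card (column L th 1 0)"
    using Lpos by (intro exI[of _ 1]) auto
  then have "\<exists>n. \<exists>k\<ge>1. \<exists>j<L ^ k. card (column L th k j) = n" by blast
  then show ?thesis unfolding col_min_def by (rule LeastI_ex)
qed

lemma col_le: "k \<ge> 1 \<Longrightarrow> j < L ^ k \<Longrightarrow> c \<le> card (column L th k j)"
  unfolding col_min_def by (rule Least_le) auto

lemma c_pos: "0 < c"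
proof -
  obtain k j where "card (column L th k j) = c" using col_ex by auto
  moreover have "column L th k j \<noteq> {}" unfolding column_def by auto
  ultimately show ?thesis using card_gt_0_iff[of "column L th k j"] by simp
qed

lemma minsets_step:
  assumes M: "M \<in> minsets L th" and j: "j < L"
  shows "tsubst L th 1 M j = (\<lambda>a. th a j) ` M" "tsubst L th 1 M j \<in> minsets L th"
    "inj_on (\<lambda>a. th a j) M"
proof -
  show ts: "tsubst L th 1 M j = (\<lambda>a. th a j) ` M"
    unfolding tsubst_def using j by (simp add: subst_pow_1)
  obtain k j' where k: "k \<ge> 1" "j' < L ^ k" "M = column L th k j'" and cM: "card M = c"
    using M unfolding minsets_def by auto
  have dm: "(j' * L + j) div L = j'" "(j' * L + j) mod L = j" using j by auto
  have sp: "\<And>a. subst_pow L th (Suc k) a (j' * L + j) = th (subst_pow L th k a j') j"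
    using dm by simp
  have col: "(\<lambda>a. th a j) ` M = column L th (Suc k) (j' * L + j)"
  proof -
    have "column L th (Suc k) (j' * L + j) = {th (subst_pow L th k a j') j | a. True}"
      unfolding column_def sp by simp
    also have "\<dots> = (\<lambda>a. th a j) ` column L th k j'" unfolding column_def by blast
    finally show ?thesis using k(3) by simp
  qed
  have lt: "j' * L + j < L ^ Suc k"
  proof -
    have "j' * L + j < j' * L + L" using j by simp
    also have "\<dots> = (j' + 1) * L" by simp
    also have "\<dots> \<le> L ^ k * L" using k(2) by (intro mult_right_mono) auto
    finally show ?thesis by (simp add: mult.commute)
  qed
  have "c \<le> card ((\<lambda>a. th a j) ` M)" unfolding col by (rule col_le) (use lt in auto)
  moreover have "card ((\<lambda>a. th a j) ` M) \<le> c" using cM card_image_le[of M "\<lambda>a. th a j"] by simp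
  ultimately have ceq: "card ((\<lambda>a. th a j) ` M) = c" by simp
  show "tsubst L th 1 M j \<in> minsets L th" unfolding minsets_def ts
  proof (rule CollectI, rule conjI)
    show "card ((\<lambda>a. th a j) ` M) = c" by (rule ceq)
    have "Suc k \<ge> 1 \<and> j' * L + j < L ^ Suc k \<and> (\<lambda>a. th a j) ` M = column L th (Suc k) (j' * L + j)"
      using col lt by simp
    then show "\<exists>kk\<ge>1. \<exists>jj<L ^ kk. (\<lambda>a. th a j) ` M = column L th kk jj"
      apply -
      apply (rule exI[of _ "Suc k"])
      apply (rule conjI, simp)
      apply (rule exI[of _ "j' * L + j"])
      by simp
  qed
  show "inj_on (\<lambda>a. th a j) M" using ceq cM eq_card_imp_inj_on[of M "\<lambda>a. th a j"] by simp
qed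

lemma k0_inj: assumes M: "M \<in> minsets L th" shows "inj_on (\<lambda>a. subst_pow L th k0 a j0) M"
proof -
  have cM: "card M = c" "card M0 = c" using M M0 unfolding minsets_def by simp_all
  have "(\<lambda>a. subst_pow L th k0 a j0) ` M = M0" using bspec[OF k0 M] unfolding tsubst_def .
  then have "card ((\<lambda>a. subst_pow L th k0 a j0) ` M) = card M" using cM by simp
  then show ?thesis by (rule eq_card_imp_inj_on[OF finite])
qed

lemma eM_prop: assumes M: "M \<in> minsets L th" and i: "i < c"
  shows "eM L th k0 j0 e0 M i \<in> M \<and> subst_pow L th k0 (eM L th k0 j0 e0 M i) j0 = e0 i"
proof -
  have "e0 i \<in> M0" using e0 i by (auto simp: bij_betw_def)
  moreover have "(\<lambda>a. subst_pow L th k0 a j0) ` M = M0" using bspec[OF k0 M] unfolding tsubst_def .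
  ultimately obtain a where a: "a \<in> M" "subst_pow L th k0 a j0 = e0 i" by (metis imageE)
  show ?thesis unfolding eM_def
    apply (rule theI[of _ a])
    using a apply simp
    using a k0_inj[OF M] by (auto simp: inj_on_def)
qed

lemma eM_bij: assumes M: "M \<in> minsets L th" shows "bij_betw (eM L th k0 j0 e0 M) {..<c} M"
proof -
  have inj: "inj_on (eM L th k0 j0 e0 M) {..<c}"
  proof (rule inj_onI)
    fix x y assume "x \<in> {..<c}" "y \<in> {..<c}" "eM L th k0 j0 e0 M x = eM L th k0 j0 e0 M y"
    then have "e0 x = e0 y" using eM_prop[OF M, of x] eM_prop[OF M, of y] \<open>x \<in> _\<close> \<open>y \<in> _\<close> by simp
    then show "x = y" using e0 \<open>x \<in> _\<close> \<open>y \<in> _\<close> by (auto simp: bij_betw_def dest: inj_onD)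
  qed
  moreover have "eM L th k0 j0 e0 M ` {..<c} = M"
  proof
    show "eM L th k0 j0 e0 M ` {..<c} \<subseteq> M" using eM_prop[OF M] by auto
    show "M \<subseteq> eM L th k0 j0 e0 M ` {..<c}"
    proof
      fix a assume a: "a \<in> M"
      have "subst_pow L th k0 a j0 \<in> M0" using bspec[OF k0 M] a unfolding tsubst_def by blast
      then obtain i where i: "i < c" "e0 i = subst_pow L th k0 a j0"
        using e0 by (auto simp: bij_betw_def)
      then have "eM L th k0 j0 e0 M i = a" using eM_prop[OF M i(1)] inj_onD[OF k0_inj[OF M]] a
        by simp
      then show "a \<in> eM L th k0 j0 e0 M ` {..<c}" using i by auto
    qed
  qed
  ultimately show ?thesis by (auto simp: bij_betw_def)
qed

end


context ctx begin
lemma sigma_prop: assumes M: "M \<in> minsets L th" and j: "j < L" and m: "m < c"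
  shows "sigmaM L th k0 j0 e0 M j m < c \<and>
    th (eM L th k0 j0 e0 M (sigmaM L th k0 j0 e0 M j m)) j = eM L th k0 j0 e0 (tsubst L th 1 M j) m"
proof -
  let ?e = "eM L th k0 j0 e0 M" and ?e' = "eM L th k0 j0 e0 (tsubst L th 1 M j)"
  note ms = minsets_step[OF M j]
  have "?e' m \<in> tsubst L th 1 M j" using eM_prop[OF ms(2) m] by auto
  then obtain a where a: "a \<in> M" "th a j = ?e' m" using ms(1) by auto
  then obtain n where n: "n < c" "?e n = a" using eM_bij[OF M] unfolding bij_betw_def by (metis imageE lessThan_iff)
  have u: "\<And>n'. n' < c \<Longrightarrow> th (?e n') j = ?e' m \<Longrightarrow> n' = n"
  proof -
    fix n' assume "n' < c" "th (?e n') j = ?e' m"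
    then have "?e n' = ?e n" using inj_onD[OF ms(3)] a n eM_prop[OF M n(1)] eM_prop[OF M \<open>n' < c\<close>] by simp
    then show "n' = n" using eM_bij[OF M] \<open>n' < c\<close> n(1) by (auto simp: bij_betw_def dest: inj_onD)
  qed
  have eq: "sigmaM L th k0 j0 e0 M j m = (THE n. n < c \<and> th (?e n) j = ?e' m)"
    using m by (simp add: sigmaM_def)
  have "(\<lambda>n. n < c \<and> th (?e n) j = ?e' m) (THE n. n < c \<and> th (?e n) j = ?e' m)"
    apply (rule theI[of _ n])
    using n a apply simp
    using u by blast
  then show ?thesis unfolding eq by simp
qed

lemma sigma_Pm: assumes M: "M \<in> minsets L th" and j: "j < L"
  shows "Pm c (sigmaM L th k0 j0 e0 M j)"
proof -
  let ?s = "sigmaM L th k0 j0 e0 M j"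
  let ?e = "eM L th k0 j0 e0 M" and ?e' = "eM L th k0 j0 e0 (tsubst L th 1 M j)"
  note ms = minsets_step[OF M j]
  have out: "\<And>n. c \<le> n \<Longrightarrow> ?s n = n" unfolding sigmaM_def by auto
  have inj: "inj_on ?s {..<c}"
  proof (rule inj_onI)
    fix x y assume xy: "x \<in> {..<c}" "y \<in> {..<c}" "?s x = ?s y"
    then have "?e' x = ?e' y" using sigma_prop[OF M j, of x] sigma_prop[OF M j, of y] xy by simp
    then show "x = y" using eM_bij[OF ms(2)] xy by (auto simp: bij_betw_def dest: inj_onD)
  qed
  have img: "?s ` {..<c} = {..<c}"
  proof -
    have "?s ` {..<c} \<subseteq> {..<c}" using sigma_prop[OF M j] by auto
    moreover have "card (?s ` {..<c}) = card {..<c}" using inj card_image by blast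
    ultimately show ?thesis using card_subset_eq[of "{..<c}" "?s ` {..<c}"] by simp
  qed
  have b1: "bij_betw ?s {..<c} {..<c}" using inj img by (auto simp: bij_betw_def)
  have b2: "bij_betw ?s {c..} {c..}" using out by (auto simp: bij_betw_def inj_on_def image_def intro!: bexI)
  have "bij_betw ?s ({..<c} \<union> {c..}) ({..<c} \<union> {c..})"
    by (rule bij_betw_combine[OF b1 b2]) auto
  moreover have "{..<c} \<union> {c..} = (UNIV :: nat set)" by auto
  ultimately have "bij ?s" by simp
  then show ?thesis unfolding Pm_def using out sigma_prop[OF M j] by auto
qed

lemma G_Pm: "s \<in> Ggroup L th k0 j0 e0 \<Longrightarrow> Pm c s"
  unfolding Ggroup_def
proof (induction rule: gen_group.induct)
  case gen_id then show ?case unfolding Pm_def by auto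
next
  case (gen_base s) then show ?case using sigma_Pm by auto
next
  case (gen_comp f g) then show ?case using Pm_comp by blast
next
  case (gen_inv f) then show ?case using Pm_inv by auto
qed

definition tau :: "(nat \<Rightarrow> nat) \<times> 'a set \<Rightarrow> 'a" where
  "tau p = eM L th k0 j0 e0 (snd p) (THE n. n < c \<and> fst p n = 0)"

lemma hat_step: assumes p: "p \<in> hatAlph L th k0 j0 e0" and j: "j < L"
  shows "hatTheta L th k0 j0 e0 p j \<in> hatAlph L th k0 j0 e0 \<and>
         tau (hatTheta L th k0 j0 e0 p j) = th (tau p) j"
proof -
  obtain s M where sM: "p = (s, M)" "s \<in> Ggroup L th k0 j0 e0" "M \<in> minsets L th"
    using p unfolding hatAlph_def by auto
  let ?t = "sigmaM L th k0 j0 e0 M j"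
  note ms = minsets_step[OF sM(3) j]
  have tG: "?t \<in> Ggroup L th k0 j0 e0" unfolding Ggroup_def
    by (rule gen_base) (use sM(3) j in auto)
  have "s \<circ> ?t \<in> Ggroup L th k0 j0 e0" using sM(2) tG unfolding Ggroup_def by (rule gen_comp)
  then have A: "hatTheta L th k0 j0 e0 p j \<in> hatAlph L th k0 j0 e0"
    unfolding hatTheta_def hatAlph_def sM(1) using ms(2) by auto
  have Ps: "Pm c s" using G_Pm sM(2) by auto
  have Pt: "Pm c ?t" using sigma_Pm sM(3) j by auto
  define n0 where "n0 = (THE n. n < c \<and> s n = 0)"
  have n0: "n0 < c" "s n0 = 0" using theI'[OF Pm_zero[OF Ps c_pos]] unfolding n0_def by auto
  obtain n' where n': "n' < c" "?t n' = n0" using Pm_surj[OF Pt n0(1)] by auto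
  have "(THE n. n < c \<and> (s \<circ> ?t) n = 0) = n'"
    by (rule the1_equality[OF Pm_zero[OF Pm_comp[OF Ps Pt] c_pos]]) (use n' n0 in auto)
  then have "tau (hatTheta L th k0 j0 e0 p j) = eM L th k0 j0 e0 (tsubst L th 1 M j) n'"
    unfolding tau_def hatTheta_def sM(1) by simp
  also have "\<dots> = th (eM L th k0 j0 e0 M n0) j" using sigma_prop[OF sM(3) j n'(1)] n' by simp
  also have "\<dots> = th (tau p) j" unfolding tau_def sM(1) n0_def by simp
  finally show ?thesis using A by simp
qed

lemma hat_iter: assumes p: "p \<in> hatAlph L th k0 j0 e0"
  shows "i < L ^ k \<Longrightarrow> subst_pow L (hatTheta L th k0 j0 e0) k p i \<in> hatAlph L th k0 j0 e0 \<and>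
         tau (subst_pow L (hatTheta L th k0 j0 e0) k p i) = subst_pow L th k (tau p) i"
proof (induction k arbitrary: i)
  case 0 then show ?case using p by simp
next
  case (Suc k)
  have "i div L < L ^ k" using Suc.prems Lpos
    by (simp add: less_mult_imp_div_less mult.commute)
  moreover have "i mod L < L" using Lpos by simp
  ultimately show ?case using Suc.IH hat_step by simp
qed

end


context ctx begin

abbreviation "Hat \<equiv> hatAlph L th k0 j0 e0"
abbreviation "HT \<equiv> hatTheta L th k0 j0 e0"
abbreviation "p0 \<equiv> (id :: nat \<Rightarrow> nat, M0)"

lemma p0_Hat: "p0 \<in> Hat"
  unfolding hatAlph_def Ggroup_def using M0 by (auto intro: gen_group.gen_id)

lemma Hat_finite: "finite Hat"
proof -
  have "Ggroup L th k0 j0 e0 \<subseteq> {s. Pm c s}" using G_Pm by auto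
  then have "finite (Ggroup L th k0 j0 e0)" using Pm_finite finite_subset by blast
  then show ?thesis unfolding hatAlph_def by simp
qed

lemma lang_map: assumes "w \<in> subst_lang Hat L HT" shows "map tau w \<in> subst_lang UNIV L th"
proof -
  from assms obtain b k i where b: "b \<in> Hat" "i + length w \<le> L ^ k"
    "\<forall>t<length w. w ! t = subst_pow L HT k b (i + t)" unfolding subst_lang_def by auto
  have "\<forall>t<length w. map tau w ! t = subst_pow L th k (tau b) (i + t)"
    using b hat_iter[OF b(1)] by auto
  then show ?thesis unfolding subst_lang_def using b(2) by auto
qed

lemma lift_word: assumes "w \<in> subst_lang UNIV L th"
  shows "\<exists>k i. i + length w \<le> L ^ k \<and> (\<forall>t<length w. tau (subst_pow L HT k p0 (i + t)) = w ! t)"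
proof -
  from assms obtain b k i where b: "i + length w \<le> L ^ k"
    "\<forall>t<length w. w ! t = subst_pow L th k b (i + t)" unfolding subst_lang_def by auto
  from prim obtain p where p: "p \<ge> 1" "\<forall>a b. \<exists>j<L ^ p. subst_pow L th p a j = b"
    unfolding primitive_subst_def by auto
  then obtain j where j: "j < L ^ p" "subst_pow L th p (tau p0) j = b" by blast
  have bound: "j * L ^ k + i + length w \<le> L ^ (k + p)"
  proof -
    have "j * L ^ k + i + length w \<le> j * L ^ k + L ^ k" using b(1) by simp
    also have "\<dots> = (j + 1) * L ^ k" by simp
    also have "\<dots> \<le> L ^ p * L ^ k" using j(1) by (intro mult_right_mono) auto
    finally show ?thesis by (simp add: power_add mult.commute)
  qed
  have "\<forall>t<length w. tau (subst_pow L HT (k + p) p0 (j * L ^ k + i + t)) = w ! t"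
  proof (intro allI impI)
    fix t assume t: "t < length w"
    have lt: "j * L ^ k + i + t < L ^ (k + p)" using bound t by simp
    have "tau (subst_pow L HT (k + p) p0 (j * L ^ k + i + t)) = subst_pow L th (k + p) (tau p0) (j * L ^ k + (i + t))"
      using hat_iter[OF p0_Hat lt] by (simp add: add.assoc)
    also have "\<dots> = subst_pow L th k b (i + t)"
      using subst_pow_add[OF Lpos, of "i + t" k th p "tau p0" j] j(2) b(1) t by simp
    finally show "tau (subst_pow L HT (k + p) p0 (j * L ^ k + i + t)) = w ! t" using b(2) t by simp
  qed
  then show ?thesis using bound by (intro exI[of _ "k + p"] exI[of _ "j * L ^ k + i"]) (simp add: add.assoc)
qed

definition liftok :: "(int \<Rightarrow> 'a) \<Rightarrow> nat \<Rightarrow> (int \<Rightarrow> (nat \<Rightarrow> nat) \<times> 'a set) \<Rightarrow> bool" where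
  "liftok y M g \<longleftrightarrow> (\<forall>i. - int M \<le> i \<and> i \<le> int M \<longrightarrow> tau (g i) = y i \<and> g i \<in> Hat) \<and>
     map (\<lambda>t. g (- int M + int t)) [0..<2*M+1] \<in> subst_lang Hat L HT"

lemma liftok_ex: assumes y: "y \<in> subshift UNIV L th" shows "\<exists>g. liftok y M g"
proof -
  define w where "w = map (\<lambda>t. y (- int M + int t)) [0..<2*M+1]"
  have "w \<in> subst_lang UNIV L th" using y unfolding subshift_def w_def by blast
  from lift_word[OF this] obtain k i where ki: "i + length w \<le> L ^ k"
    "\<forall>t<length w. tau (subst_pow L HT k p0 (i + t)) = w ! t" by blast
  define g where "g z = subst_pow L HT k p0 (i + nat (z + int M))" for z
  have lw: "length w = 2*M+1" unfolding w_def by simp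
  have "liftok y M g" unfolding liftok_def
  proof (intro conjI allI impI)
    fix z assume z: "- int M \<le> z \<and> z \<le> int M"
    then have lt: "nat (z + int M) < length w" unfolding lw by linarith
    have "tau (g z) = w ! nat (z + int M)" unfolding g_def using ki(2) lt by simp
    also have "\<dots> = y z" unfolding w_def using lt z lw by (simp del: upt_Suc)
    finally show "tau (g z) = y z" .
    show "g z \<in> Hat" unfolding g_def using hat_iter[OF p0_Hat] lt ki(1) by simp
  next
    show "map (\<lambda>t. g (- int M + int t)) [0..<2*M+1] \<in> subst_lang Hat L HT"
      unfolding subst_lang_def
      apply (rule CollectI, rule bexI[OF _ p0_Hat], rule exI[of _ k], rule exI[of _ i])
      using ki(1) lw by (auto simp: g_def simp del: upt_Suc)
  qed
  then show ?thesis by blast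
qed

lemma liftok_mono: assumes "liftok y M g" "M' \<le> M" shows "liftok y M' g"
  unfolding liftok_def
proof (intro conjI allI impI)
  fix i assume "- int M' \<le> i \<and> i \<le> int M'"
  then show "tau (g i) = y i" "g i \<in> Hat" using assms unfolding liftok_def by auto
next
  show "map (\<lambda>t. g (- int M' + int t)) [0..<2*M'+1] \<in> subst_lang Hat L HT"
    apply (rule lang_sub[of "map (\<lambda>t. g (- int M + int t)) [0..<2*M+1]" _ _ _ "M - M'"])
    using assms unfolding liftok_def by (auto simp del: upt_Suc simp: of_nat_diff)
qed

end


context ctx begin

definition good :: "(int \<Rightarrow> 'a) \<Rightarrow> nat \<Rightarrow> (int \<Rightarrow> (nat \<Rightarrow> nat) \<times> 'a set) \<Rightarrow> bool" where
  "good y N f \<longleftrightarrow> (\<forall>M\<ge>N. \<exists>g. liftok y M g \<and> (\<forall>i. \<bar>i\<bar> < int N \<longrightarrow> g i = f i))"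

lemma good_step: assumes gd: "good y N f"
  shows "\<exists>f'. good y (Suc N) f' \<and> (\<forall>i. \<bar>i\<bar> < int N \<longrightarrow> f' i = f i)"
proof (rule ccontr)
  assume H: "\<not> ?thesis"
  define fq where "fq q = f(- int N := fst q, int N := snd q)" for q :: "((nat \<Rightarrow> nat) \<times> 'a set) \<times> ((nat \<Rightarrow> nat) \<times> 'a set)"
  have agr: "\<forall>i. \<bar>i\<bar> < int N \<longrightarrow> fq q i = f i" for q unfolding fq_def by auto
  have "\<forall>q\<in>Hat \<times> Hat. \<exists>M. M \<ge> Suc N \<and> (\<forall>g. liftok y M g \<longrightarrow> \<not> (\<forall>i. \<bar>i\<bar> < int (Suc N) \<longrightarrow> g i = fq q i))"
  proof
    fix q assume "q \<in> Hat \<times> Hat"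
    have "\<not> good y (Suc N) (fq q)" using H agr[of q] by blast
    then show "\<exists>M. M \<ge> Suc N \<and> (\<forall>g. liftok y M g \<longrightarrow> \<not> (\<forall>i. \<bar>i\<bar> < int (Suc N) \<longrightarrow> g i = fq q i))"
      unfolding good_def by blast
  qed
  then obtain Mf where Mf: "\<And>q. q \<in> Hat \<times> Hat \<Longrightarrow> Mf q \<ge> Suc N \<and>
      (\<forall>g. liftok y (Mf q) g \<longrightarrow> \<not> (\<forall>i. \<bar>i\<bar> < int (Suc N) \<longrightarrow> g i = fq q i))"
    by metis
  define Mx where "Mx = Max (Mf ` (Hat \<times> Hat))"
  have fin: "finite (Mf ` (Hat \<times> Hat))" using Hat_finite by simp
  have le: "q \<in> Hat \<times> Hat \<Longrightarrow> Mf q \<le> Mx" for q unfolding Mx_def using fin by simp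
  have "N \<le> Mx" using le[of "(p0, p0)"] Mf[of "(p0, p0)"] p0_Hat by simp
  then obtain g where g: "liftok y Mx g" "\<forall>i. \<bar>i\<bar> < int N \<longrightarrow> g i = f i"
    using gd unfolding good_def by blast
  define q where "q = (g (- int N), g (int N))"
  have "q \<in> Hat \<times> Hat" using g(1) \<open>N \<le> Mx\<close> unfolding liftok_def q_def by auto
  then have "liftok y (Mf q) g" using liftok_mono[OF g(1) le] by blast
  moreover have "\<forall>i. \<bar>i\<bar> < int (Suc N) \<longrightarrow> g i = fq q i"
  proof (intro allI impI)
    fix i :: int assume i: "\<bar>i\<bar> < int (Suc N)"
    show "g i = fq q i"
    proof (cases "i = int N")
      case True then show ?thesis unfolding fq_def q_def by simp
    next
      case False
      show ?thesis
      proof (cases "i = - int N")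
        case True then show ?thesis using False unfolding fq_def q_def by simp
      next
        case False2: False
        then have "\<bar>i\<bar> < int N" using i False by auto
        then show ?thesis using g(2) False False2 unfolding fq_def by simp
      qed
    qed
  qed
  ultimately show False using Mf[OF \<open>q \<in> Hat \<times> Hat\<close>] by blast
qed

lemma lift_point: assumes y: "y \<in> subshift UNIV L th"
  shows "\<exists>x\<in>subshift Hat L HT. (\<lambda>n. tau (x n)) = y"
proof -
  define step where "step N f = (SOME f'. good y (Suc N) f' \<and> (\<forall>i. \<bar>i\<bar> < int N \<longrightarrow> f' i = f i))" for N f
  define F where "F = rec_nat (\<lambda>_::int. p0) step"
  have F0: "F 0 = (\<lambda>_. p0)" and FS: "F (Suc N) = step N (F N)" for N unfolding F_def by simp_all
  have G: "good y N (F N) \<and> (\<forall>i. \<bar>i\<bar> < int N \<longrightarrow> F (Suc N) i = F N i)" for N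
  proof (induction N)
    case 0
    have g0: "good y 0 (F 0)" unfolding good_def using liftok_ex[OF y] by auto
    show ?case using someI_ex[OF good_step[OF g0]] g0 unfolding FS step_def by simp
  next
    case (Suc N)
    have gS: "good y (Suc N) (F (Suc N))"
      using someI_ex[OF good_step[OF conjunct1[OF Suc.IH]]] unfolding FS step_def by simp
    show ?case using someI_ex[OF good_step[OF gS]] gS unfolding FS[of "Suc N"] step_def by simp
  qed
  have stab: "N0 \<le> N \<Longrightarrow> \<bar>i\<bar> < int N0 \<Longrightarrow> F N i = F N0 i" for i N0 N
  proof (induction rule: dec_induct)
    case base then show ?case by simp
  next
    case (step n) then show ?case using G[of n] by force
  qed
  define x where "x i = F (nat \<bar>i\<bar> + 1) i" for i
  have xF: "\<bar>i\<bar> < int N \<Longrightarrow> x i = F N i" for i N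
    unfolding x_def using stab[of "nat \<bar>i\<bar> + 1" N i] by simp
  have xy: "(\<lambda>n. tau (x n)) = y"
  proof
    fix i
    obtain g where g: "liftok y (nat \<bar>i\<bar> + 1) g" "\<forall>j. \<bar>j\<bar> < int (nat \<bar>i\<bar> + 1) \<longrightarrow> g j = F (nat \<bar>i\<bar> + 1) j"
      using conjunct1[OF G[of "nat \<bar>i\<bar> + 1"]] unfolding good_def by blast
    have "- int (nat \<bar>i\<bar> + 1) \<le> i \<and> i \<le> int (nat \<bar>i\<bar> + 1)" by arith
    then have "tau (g i) = y i" using g(1) unfolding liftok_def by blast
    moreover have "g i = x i" using g(2) xF[of i "nat \<bar>i\<bar> + 1"] by simp
    ultimately show "tau (x i) = y i" by simp
  qed
  have "x \<in> subshift Hat L HT" unfolding subshift_def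
  proof (intro CollectI allI)
    fix m :: int and n :: nat
    define N where "N = nat \<bar>m\<bar> + n + 1"
    obtain g where g: "liftok y N g" "\<forall>j. \<bar>j\<bar> < int N \<longrightarrow> g j = F N j"
      using conjunct1[OF G[of N]] unfolding good_def by blast
    have win: "map (\<lambda>t. g (- int N + int t)) [0..<2*N+1] \<in> subst_lang Hat L HT"
      using g(1) unfolding liftok_def by simp
    show "map (\<lambda>t. x (m + int t)) [0..<n] \<in> subst_lang Hat L HT"
    proof (rule lang_sub[OF win, where s = "nat (m + int N)"])
      show "nat (m + int N) + length (map (\<lambda>t. x (m + int t)) [0..<n]) \<le> length (map (\<lambda>t. g (- int N + int t)) [0..<2*N+1])"
        unfolding N_def by simp
      show "\<forall>t<length (map (\<lambda>t. x (m + int t)) [0..<n]).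
          map (\<lambda>t. x (m + int t)) [0..<n] ! t = map (\<lambda>t. g (- int N + int t)) [0..<2*N+1] ! (nat (m + int N) + t)"
      proof (intro allI impI)
        fix t assume t: "t < length (map (\<lambda>t. x (m + int t)) [0..<n])"
        then have t': "t < n" by simp
        have lt: "nat (m + int N) + t < 2*N+1" using t' unfolding N_def by simp
        have a: "\<bar>m + int t\<bar> < int N" using t' unfolding N_def by simp
        have "map (\<lambda>t. g (- int N + int t)) [0..<2*N+1] ! (nat (m + int N) + t) = g (m + int t)"
        proof -
          have nn: "0 \<le> m + int N" unfolding N_def by arith
          have e: "- int N + int (nat (m + int N) + t) = m + int t" using nn by simp
          show ?thesis using lt nn by (simp del: upt_Suc add: e)
        qed
        also have "\<dots> = x (m + int t)" using g(2) a xF[OF a] by simp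
        finally show "map (\<lambda>t. x (m + int t)) [0..<n] ! t = map (\<lambda>t. g (- int N + int t)) [0..<2*N+1] ! (nat (m + int N) + t)"
          using t' by simp
      qed
    qed
  qed
  then show ?thesis using xy by blast
qed

end


context ctx begin

lemma main_loc:
  shows "\<exists>\<pi>. continuous_map
              (subtopology shift_topology (subshift Hat L HT))
              (subtopology shift_topology (subshift UNIV L th)) \<pi>
           \<and> \<pi> ` subshift Hat L HT = subshift UNIV L th
           \<and> (\<forall>x\<in>subshift Hat L HT. \<pi> (shift x) = shift (\<pi> x))"
proof (intro exI conjI)
  let ?pi = "\<lambda>x n. tau (x n)"
  have into: "?pi ` subshift Hat L HT \<subseteq> subshift UNIV L th"
  proof
    fix z assume "z \<in> ?pi ` subshift Hat L HT"
    then obtain x where x: "x \<in> subshift Hat L HT" "z = ?pi x" by blast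
    show "z \<in> subshift UNIV L th" unfolding subshift_def
    proof (intro CollectI allI)
      fix m :: int and n :: nat
      have "map (\<lambda>t. x (m + int t)) [0..<n] \<in> subst_lang Hat L HT" using x(1) unfolding subshift_def by blast
      from lang_map[OF this] show "map (\<lambda>t. z (m + int t)) [0..<n] \<in> subst_lang UNIV L th"
        unfolding x(2) by (simp add: o_def)
    qed
  qed
  have cont: "continuous_map shift_topology shift_topology ?pi"
    unfolding shift_topology_def continuous_map_componentwise_UNIV
  proof
    fix k :: int
    have "continuous_map (product_topology (\<lambda>_. discrete_topology UNIV) UNIV) (discrete_topology UNIV) (\<lambda>x. x k)"
      by (rule continuous_map_product_projection) simp
    then have "continuous_map (product_topology (\<lambda>_. discrete_topology UNIV) UNIV) (discrete_topology UNIV) (tau \<circ> (\<lambda>x. x k))"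
      by (rule continuous_map_compose) simp
    then show "continuous_map (product_topology (\<lambda>_. discrete_topology UNIV) UNIV) (discrete_topology UNIV) (\<lambda>x. tau (x k))"
      by (simp add: o_def)
  qed
  show "continuous_map (subtopology shift_topology (subshift Hat L HT))
              (subtopology shift_topology (subshift UNIV L th)) ?pi"
    unfolding continuous_map_in_subtopology
    using continuous_map_from_subtopology[OF cont] into by auto
  show "?pi ` subshift Hat L HT = subshift UNIV L th"
  proof
    show "?pi ` subshift Hat L HT \<subseteq> subshift UNIV L th" by (rule into)
    show "subshift UNIV L th \<subseteq> ?pi ` subshift Hat L HT"
    proof
      fix y assume "y \<in> subshift UNIV L th"
      from lift_point[OF this] show "y \<in> ?pi ` subshift Hat L HT" by force
    qed
  qed
  show "\<forall>x\<in>subshift Hat L HT. ?pi (shift x) = shift (?pi x)" by (simp add: shift_def)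
qed

end

theorem mainTheorem17:
  fixes th :: "'a::finite \<Rightarrow> nat \<Rightarrow> 'a" and L :: nat
    and a0 :: 'a and M0 :: "'a set" and e0 :: "nat \<Rightarrow> 'a" and k0 j0 :: nat
  assumes "L \<ge> 2"
    and "primitive_subst UNIV L th"
    and "\<And>a b. (\<forall>j<L. th a j = th b j) \<Longrightarrow> a = b"
    and "infinite (subshift UNIV L th)"
    and "M0 \<in> minsets L th" and "a0 \<in> M0"
    and "th a0 0 = a0" and "tsubst L th 1 M0 0 = M0"
    and "bij_betw e0 {..<col_min L th} M0" and "e0 0 = a0"
    and "k0 \<ge> 1" and "j0 < L ^ k0"
    and "\<forall>a\<in>M0. subst_pow L th k0 a j0 = a"
    and "\<forall>M\<in>minsets L th. tsubst L th k0 M j0 = M0"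
  shows "\<exists>\<pi>. continuous_map
              (subtopology shift_topology (subshift (hatAlph L th k0 j0 e0) L (hatTheta L th k0 j0 e0)))
              (subtopology shift_topology (subshift UNIV L th)) \<pi>
           \<and> \<pi> ` subshift (hatAlph L th k0 j0 e0) L (hatTheta L th k0 j0 e0) = subshift UNIV L th
           \<and> (\<forall>x\<in>subshift (hatAlph L th k0 j0 e0) L (hatTheta L th k0 j0 e0).
                 \<pi> (shift x) = shift (\<pi> x))"
proof -
  interpret ctx th L k0 j0 e0 M0
    by unfold_locales (use assms in auto)
  show ?thesis by (rule main_loc)
qed



end
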